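(* Let $(\mathcal{S},\mathcal{R})$ be a positive presentation. Then $(\mathcal{S},\mathcal{R})$ is $r$-complete if and only if any one of the following four conditions holds, and these four conditions are equivalent: (i) for all $u,v\in\mathcal{S}^*$, $u\equiv v$ holds if and only if $u^{-1}v\curvearrowright_r\varepsilon$; (ii) the binary relation on $\mathcal{S}^*$ defined by "$u^{-1}v\curvearrowright_r\varepsilon$" is transitive; (iii) the strong $r$-cube condition holds at $u,v,w$ for all $u,v,w\in\mathcal{S}^*$; (iv) the $r$-cube condition holds at $u,v,w$ for all $u,v,w\in\mathcal{S}^*$.
   Context: A positive presentation is a pair $(\mathcal{S},\mathcal{R})$ where $\mathcal{S}$ is a nonempty set of letters and $\mathcal{R}$ is a family of relations $u=v$, i.e. unordered pairs $\{u,v\}$ of nonempty words in the free monoid $\mathcal{S}^*$. $\varepsilon$ denotes the empty word; $\equiv$ is the smallest congruence on $\mathcal{S}^*$ containing all pairs of $\mathcal{R}$. Let $\mathcal{S}^{-1}=\{s^{-1}:s\in\mathcal{S}\}$ be a disjoint copy of $\mathcal{S}$; for $u\in\mathcal{S}^*$, $u^{-1}$ is obtained by reversing the order of the letters of $u$ and replacing each $s$ by $s^{-1}$. Right reversing: for words $\mathbf{w},\mathbf{w}'$ on $\mathcal{S}\cup\mathcal{S}^{-1}$ we write $\mathbf{w}\curvearrowright_r\mathbf{w}'$ if $\mathbf{w}'$ is obtained from $\mathbf{w}$ by a finite (possibly empty) sequence of steps, each of which either deletes a subword $u^{-1}u$ with $u\in\mathcal{S}^*$ nonempty, or replaces a subword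 $u^{-1}v$ with $u,v\in\mathcal{S}^*$ nonempty by a word $v'u'^{-1}$ with $u',v'\in\mathcal{S}^*$ such that $uv'=vu'$ is a relation of $\mathcal{R}$. $(\mathcal{S},\mathcal{R})$ is $r$-complete if for all $u,v,u',v'\in\mathcal{S}^*$ with $uv'\equiv vu'$ there exist $u'',v'',w\in\mathcal{S}^*$ with $u^{-1}v\curvearrowright_r v''u''^{-1}$, $u'\equiv u''w$ and $v'\equiv v''w$. For $u,v,w\in\mathcal{S}^*$: the $r$-cube condition holds at $u,v,w$ if whenever $u^{-1}ww^{-1}v\curvearrowright_r v'u'^{-1}$ with $u',v'\in\mathcal{S}^*$, there exist $u'',v'',w''\in\mathcal{S}^*$ with $u^{-1}v\curvearrowright_r v''u''^{-1}$, $u'\equiv u''w''$ and $v'\equiv v''w''$; the strong $r$-cube condition holds at $u,v,w$ if whenever $u^{-1}ww^{-1}v\curvearrowright_r v'u'^{-1}$ with $u',v'\in\mathcal{S}^*$, we have $(uv')^{-1}(vu')\curvearrowright_r\varepsilon$. *)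

theory Defs
  imports Main
begin

datatype 'a sletter = Pos 'a | Neg 'a

definition pw :: "'a list \<Rightarrow> 'a sletter list" where
  "pw u = map Pos u"

definition iw :: "'a list \<Rightarrow> 'a sletter list" where
  "iw u = rev (map Neg u)"

text \<open>A relation family R is a set of pairs; a pair (u,v) represents the unordered relation u = v.\<close>
definition is_rel :: "('a list \<times> 'a list) set \<Rightarrow> 'a list \<Rightarrow> 'a list \<Rightarrow> bool" where
  "is_rel R x y \<longleftrightarrow> (x, y) \<in> R \<or> (y, x) \<in> R"

definition positive_presentation :: "'a set \<Rightarrow> ('a list \<times> 'a list) set \<Rightarrow> bool" where
  "positive_presentation S R \<longleftrightarrow> S \<noteq> {} \<and>
     (\<forall>(u, v) \<in> R. u \<noteq> [] \<and> v \<noteq> [] \<and> set u \<subseteq> S \<and> set v \<subseteq> S)"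

inductive pequiv :: "'a set \<Rightarrow> ('a list \<times> 'a list) set \<Rightarrow> 'a list \<Rightarrow> 'a list \<Rightarrow> bool"
  for S R where
  base: "(u, v) \<in> R \<Longrightarrow> pequiv S R u v"
| refl: "set w \<subseteq> S \<Longrightarrow> pequiv S R w w"
| sym: "pequiv S R u v \<Longrightarrow> pequiv S R v u"
| trans: "pequiv S R u v \<Longrightarrow> pequiv S R v w \<Longrightarrow> pequiv S R u w"
| mult: "pequiv S R u v \<Longrightarrow> pequiv S R u' v' \<Longrightarrow> pequiv S R (u @ u') (v @ v')"

inductive rrev_step :: "'a set \<Rightarrow> ('a list \<times> 'a list) set \<Rightarrow> 'a sletter list \<Rightarrow> 'a sletter list \<Rightarrow> bool"
  for S R where
  cancel: "u \<noteq> [] \<Longrightarrow> set u \<subseteq> S \<Longrightarrow>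
     rrev_step S R (x @ iw u @ pw u @ y) (x @ y)"
| rel: "u \<noteq> [] \<Longrightarrow> v \<noteq> [] \<Longrightarrow> set u \<subseteq> S \<Longrightarrow> set v \<subseteq> S \<Longrightarrow>
     set u' \<subseteq> S \<Longrightarrow> set v' \<subseteq> S \<Longrightarrow> is_rel R (u @ v') (v @ u') \<Longrightarrow>
     rrev_step S R (x @ iw u @ pw v @ y) (x @ pw v' @ iw u' @ y)"

definition rrev :: "'a set \<Rightarrow> ('a list \<times> 'a list) set \<Rightarrow> 'a sletter list \<Rightarrow> 'a sletter list \<Rightarrow> bool" where
  "rrev S R = (rrev_step S R)\<^sup>*\<^sup>*"

definition r_complete :: "'a set \<Rightarrow> ('a list \<times> 'a list) set \<Rightarrow> bool" where
  "r_complete S R \<longleftrightarrow>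
    (\<forall>u v u' v'. set u \<subseteq> S \<longrightarrow> set v \<subseteq> S \<longrightarrow> set u' \<subseteq> S \<longrightarrow> set v' \<subseteq> S \<longrightarrow>
      pequiv S R (u @ v') (v @ u') \<longrightarrow>
      (\<exists>u'' v'' w. set u'' \<subseteq> S \<and> set v'' \<subseteq> S \<and> set w \<subseteq> S \<and>
         rrev S R (iw u @ pw v) (pw v'' @ iw u'') \<and>
         pequiv S R u' (u'' @ w) \<and> pequiv S R v' (v'' @ w)))"

definition r_cube :: "'a set \<Rightarrow> ('a list \<times> 'a list) set \<Rightarrow> 'a list \<Rightarrow> 'a list \<Rightarrow> 'a list \<Rightarrow> bool" where
  "r_cube S R u v w \<longleftrightarrow>
    (\<forall>u' v'. set u' \<subseteq> S \<longrightarrow> set v' \<subseteq> S \<longrightarrow>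
      rrev S R (iw u @ pw w @ iw w @ pw v) (pw v' @ iw u') \<longrightarrow>
      (\<exists>u'' v'' w''. set u'' \<subseteq> S \<and> set v'' \<subseteq> S \<and> set w'' \<subseteq> S \<and>
         rrev S R (iw u @ pw v) (pw v'' @ iw u'') \<and>
         pequiv S R u' (u'' @ w'') \<and> pequiv S R v' (v'' @ w'')))"

definition strong_r_cube :: "'a set \<Rightarrow> ('a list \<times> 'a list) set \<Rightarrow> 'a list \<Rightarrow> 'a list \<Rightarrow> 'a list \<Rightarrow> bool" where
  "strong_r_cube S R u v w \<longleftrightarrow>
    (\<forall>u' v'. set u' \<subseteq> S \<longrightarrow> set v' \<subseteq> S \<longrightarrow>
      rrev S R (iw u @ pw w @ iw w @ pw v) (pw v' @ iw u') \<longrightarrow>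
      rrev S R (iw (u @ v') @ pw (v @ u')) [])"

end

theory Submission
  imports Defs
begin

lemma iw_Nil[simp]: "iw [] = []" and pw_Nil[simp]: "pw [] = []"
  by (simp_all add: iw_def pw_def)
lemma iw_Cons[simp]: "iw (a#u) = iw u @ [Neg a]" and pw_Cons[simp]: "pw (a#u) = Pos a # pw u"
  by (simp_all add: iw_def pw_def)
lemma iw_append[simp]: "iw (u@v) = iw v @ iw u" and pw_append[simp]: "pw (u@v) = pw u @ pw v"
  by (simp_all add: iw_def pw_def)
lemma iw_map: "iw u = map Neg (rev u)" by (simp add: iw_def rev_map)

definition lrule :: "'a set \<Rightarrow> ('a list \<times> 'a list) set \<Rightarrow> 'a \<Rightarrow> 'a \<Rightarrow> 'a list \<Rightarrow> 'a list \<Rightarrow> bool" where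
  "lrule S R s t a b \<longleftrightarrow> (s = t \<and> s \<in> S \<and> a = [] \<and> b = []) \<or>
     (s \<in> S \<and> t \<in> S \<and> set a \<subseteq> S \<and> set b \<subseteq> S \<and> is_rel R (s#a) (t#b))"

inductive lstep :: "'a set \<Rightarrow> ('a list \<times> 'a list) set \<Rightarrow> 'a sletter list \<Rightarrow> 'a sletter list \<Rightarrow> bool"
  for S R where
  "lrule S R s t a b \<Longrightarrow> lstep S R (x @ [Neg s, Pos t] @ y) (x @ pw a @ iw b @ y)"

inductive lrs :: "'a set \<Rightarrow> ('a list \<times> 'a list) set \<Rightarrow> nat \<Rightarrow> 'a sletter list \<Rightarrow> 'a sletter list \<Rightarrow> bool"
  for S R where
  lrs0: "lrs S R 0 w w"
| lrsS: "lstep S R w w1 \<Longrightarrow> lrs S R n w1 w2 \<Longrightarrow> lrs S R (Suc n) w w2"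

lemma lstep_ctx: "lstep S R w w' \<Longrightarrow> lstep S R (p@w@q) (p@w'@q)"
proof (induction rule: lstep.induct)
  case (1 s t a b x y)
  from lstep.intros[OF 1, of "p@x" "y@q"] show ?case by simp
qed

lemma lrs_ctx: "lrs S R n w w' \<Longrightarrow> lrs S R n (p@w@q) (p@w'@q)"
  by (induction rule: lrs.induct) (auto intro: lrs.intros lstep_ctx)

lemma lrs_trans: "lrs S R m a b \<Longrightarrow> lrs S R n b c \<Longrightarrow> lrs S R (m+n) a c"
  by (induction rule: lrs.induct) (auto intro: lrs.intros)

lemma lrs1: "lstep S R a b \<Longrightarrow> lrs S R 1 a b"
  by (metis One_nat_def lrs.intros)

fun nrm :: "'a sletter list \<Rightarrow> bool" where
  "nrm [] = True"
| "nrm (Pos a # w) = nrm w"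
| "nrm (Neg a # w) = (\<forall>c\<in>set w. \<exists>b. c = Neg b)"

lemma nrm_not: "\<not> nrm (x @ [Neg s, Pos t] @ y)"
proof (induction x)
  case Nil then show ?case by simp
next
  case (Cons c x) then show ?case by (cases c) auto
qed

lemma nrm_neg: "nrm (map Neg l)"
  by (cases l) auto

lemma nrm_pwiw: "nrm (pw P @ iw Q)"
  by (induction P) (auto simp: iw_map nrm_neg)

lemma nrm_lrs: "nrm w \<Longrightarrow> lrs S R n w w' \<Longrightarrow> n = 0 \<and> w' = w"
  apply (erule lrs.cases)
   apply simp
  by (erule lstep.cases) (metis nrm_not)

lemma inj_Neg: "inj Neg" by (auto simp: inj_def)

lemma pwiw_inj: "pw P @ iw Q = pw P' @ iw Q' \<Longrightarrow> P = P' \<and> Q = Q'"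
proof (induction P arbitrary: P')
  case Nil
  then show ?case
    by (cases P') (auto simp: iw_map pw_def Cons_eq_map_conv map_eq_Cons_conv inj_map_eq_map[OF inj_Neg])
next
  case (Cons p P)
  then show ?case
    by (cases P') (auto simp: iw_map pw_def Cons_eq_map_conv map_eq_Cons_conv)
qed


lemma nf_split:
  assumes "w1 @ w2 = pw P @ iw Q"
  shows "\<exists>P1 Q1 P2 Q2. w1 = pw P1 @ iw Q1 \<and> w2 = pw P2 @ iw Q2 \<and> (Q1 = [] \<or> P2 = []) \<and>
           P = P1 @ P2 \<and> Q = Q2 @ Q1"
proof -
  from assms[unfolded iw_map pw_def] obtain us where
    "(w1 = map Pos P @ us \<and> us @ w2 = map Neg (rev Q)) \<or> (w1 @ us = map Pos P \<and> w2 = us @ map Neg (rev Q))"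
    by (auto simp: append_eq_append_conv2)
  then show ?thesis
  proof
    assume h: "w1 = map Pos P @ us \<and> us @ w2 = map Neg (rev Q)"
    then obtain l1 l2 where "us = map Neg l1" "w2 = map Neg l2" "rev Q = l1 @ l2"
      by (auto simp: append_eq_map_conv)
    then have "w1 = pw P @ iw (rev l1) \<and> w2 = pw [] @ iw (rev l2) \<and> (rev l1 = [] \<or> [] = []) \<and>
           P = P @ [] \<and> Q = rev l2 @ rev l1" using h
      by (auto simp: iw_map pw_def) (metis rev_append rev_rev_ident)
    then show ?thesis by blast
  next
    assume h: "w1 @ us = map Pos P \<and> w2 = us @ map Neg (rev Q)"
    then obtain P1 P2 where "w1 = map Pos P1" "us = map Pos P2" "P = P1 @ P2"
      by (auto simp: append_eq_map_conv)
    then have "w1 = pw P1 @ iw [] \<and> w2 = pw P2 @ iw Q \<and> ([] = [] \<or> P2 = []) \<and>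
           P = P1 @ P2 \<and> Q = Q @ []" using h
      by (auto simp: iw_map pw_def)
    then show ?thesis by blast
  qed
qed

lemma cut3:
  assumes "w1 @ w2 = x @ [c, d] @ y"
  shows "(\<exists>y1. w1 = x @ [c,d] @ y1 \<and> y = y1 @ w2) \<or> (\<exists>x2. x = w1 @ x2 \<and> w2 = x2 @ [c,d] @ y)
         \<or> (w1 = x @ [c] \<and> w2 = d # y)"
proof -
  from assms obtain us where
    "(w1 = x @ us \<and> us @ w2 = c # d # y) \<or> (w1 @ us = x \<and> w2 = us @ c # d # y)"
    by (auto simp: append_eq_append_conv2)
  then show ?thesis
  proof
    assume h: "w1 = x @ us \<and> us @ w2 = c # d # y"
    show ?thesis
    proof (cases us)
      case Nil then show ?thesis using h by auto
    next
      case (Cons e us')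
      then show ?thesis using h by (cases us') auto
    qed
  next
    assume "w1 @ us = x \<and> w2 = us @ c # d # y"
    then show ?thesis by auto
  qed
qed


lemma nrm_lrs_pwiw: "lrs S R n (pw P @ iw Q) (pw P' @ iw Q') \<Longrightarrow> n = 0 \<and> P' = P \<and> Q' = Q"
  using nrm_lrs[OF nrm_pwiw] pwiw_inj by metis

lemma split_lrs:
  assumes "lrs S R n (w1 @ w2) (pw P @ iw Q)"
  shows "\<exists>n1 n2 n3 P1 Q1 P2 Q2 P3 Q3. n1 + n2 + n3 \<le> n \<and> lrs S R n1 w1 (pw P1 @ iw Q1) \<and>
     lrs S R n2 w2 (pw P2 @ iw Q2) \<and> lrs S R n3 (iw Q1 @ pw P2) (pw P3 @ iw Q3) \<and>
     P = P1 @ P3 \<and> Q = Q2 @ Q3"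
  using assms
proof (induction n arbitrary: w1 w2 P Q rule: less_induct)
  case (less n)
  show ?case
  proof (cases n)
    case 0
    then have "w1 @ w2 = pw P @ iw Q" using less.prems by (auto elim: lrs.cases)
    then obtain P1 Q1 P2 Q2 where h: "w1 = pw P1 @ iw Q1" "w2 = pw P2 @ iw Q2" "Q1 = [] \<or> P2 = []"
        "P = P1 @ P2" "Q = Q2 @ Q1"
      using nf_split by blast
    from h(3) show ?thesis
    proof
      assume "Q1 = []"
      then have "0+0+0 \<le> n \<and> lrs S R 0 w1 (pw P1 @ iw []) \<and>
        lrs S R 0 w2 (pw P2 @ iw Q2) \<and> lrs S R 0 (iw [] @ pw P2) (pw P2 @ iw []) \<and>
        P = P1 @ P2 \<and> Q = Q2 @ []" using h by (auto intro: lrs0)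
      then show ?thesis by blast
    next
      assume "P2 = []"
      then have "0+0+0 \<le> n \<and> lrs S R 0 w1 (pw P1 @ iw Q1) \<and>
        lrs S R 0 w2 (pw [] @ iw Q2) \<and> lrs S R 0 (iw Q1 @ pw []) (pw [] @ iw Q1) \<and>
        P = P1 @ [] \<and> Q = Q2 @ Q1" using h by (auto intro: lrs0)
      then show ?thesis by blast
    qed
  next
    case (Suc m)
    from less.prems Suc obtain W' where st: "lstep S R (w1@w2) W'" and rest: "lrs S R m W' (pw P @ iw Q)"
      by (auto elim: lrs.cases)
    from st obtain x s t a b y where eq: "w1@w2 = x @ [Neg s, Pos t] @ y"
      and W': "W' = x @ pw a @ iw b @ y" and lr: "lrule S R s t a b"
      by (auto elim: lstep.cases)
    have mn: "m < n" using Suc by simp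
    from cut3[OF eq] consider (L) y1 where "w1 = x @ [Neg s, Pos t] @ y1" "y = y1 @ w2"
      | (Rt) x2 where "x = w1 @ x2" "w2 = x2 @ [Neg s, Pos t] @ y"
      | (M) "w1 = x @ [Neg s]" "w2 = Pos t # y"
      by blast
    then show ?thesis
    proof cases
      case L
      have "lrs S R m ((x @ pw a @ iw b @ y1) @ w2) (pw P @ iw Q)" using rest W' L by simp
      from less.IH[OF mn this] obtain n1 n2 n3 P1 Q1 P2 Q2 P3 Q3 where
        h: "n1 + n2 + n3 \<le> m" "lrs S R n1 (x @ pw a @ iw b @ y1) (pw P1 @ iw Q1)"
        "lrs S R n2 w2 (pw P2 @ iw Q2)" "lrs S R n3 (iw Q1 @ pw P2) (pw P3 @ iw Q3)"
        "P = P1 @ P3" "Q = Q2 @ Q3" by blast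
      have "lstep S R w1 (x @ pw a @ iw b @ y1)" using L lstep.intros[OF lr] by simp
      from lrsS[OF this h(2)] have "lrs S R (Suc n1) w1 (pw P1 @ iw Q1)" .
      moreover have "Suc n1 + n2 + n3 \<le> n" using h(1) Suc by simp
      ultimately show ?thesis using h by blast
    next
      case Rt
      have "lrs S R m (w1 @ (x2 @ pw a @ iw b @ y)) (pw P @ iw Q)" using rest W' Rt by simp
      from less.IH[OF mn this] obtain n1 n2 n3 P1 Q1 P2 Q2 P3 Q3 where
        h: "n1 + n2 + n3 \<le> m" "lrs S R n1 w1 (pw P1 @ iw Q1)"
        "lrs S R n2 (x2 @ pw a @ iw b @ y) (pw P2 @ iw Q2)" "lrs S R n3 (iw Q1 @ pw P2) (pw P3 @ iw Q3)"
        "P = P1 @ P3" "Q = Q2 @ Q3" by blast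
      have "lstep S R w2 (x2 @ pw a @ iw b @ y)" using Rt lstep.intros[OF lr] by simp
      from lrsS[OF this h(3)] have "lrs S R (Suc n2) w2 (pw P2 @ iw Q2)" .
      moreover have "n1 + Suc n2 + n3 \<le> n" using h(1) Suc by simp
      ultimately show ?thesis using h by blast
    next
      case M
      have "lrs S R m (x @ (pw a @ iw b @ y)) (pw P @ iw Q)" using rest W' by simp
      from less.IH[OF mn this] obtain n1 n2 n3 A1 B1 A2 B2 A3 B3 where
        h: "n1 + n2 + n3 \<le> m" "lrs S R n1 x (pw A1 @ iw B1)"
        "lrs S R n2 (pw a @ iw b @ y) (pw A2 @ iw B2)" "lrs S R n3 (iw B1 @ pw A2) (pw A3 @ iw B3)"
        "P = A1 @ A3" "Q = B2 @ B3" by blast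
      have n2m: "n2 < n" using h(1) Suc by simp
      have "lrs S R n2 ((pw a @ iw b) @ y) (pw A2 @ iw B2)" using h(3) by simp
      from less.IH[OF n2m this] obtain m1 m2 m3 C1 D1 P2 Q2 C3 D3 where
        g: "m1 + m2 + m3 \<le> n2" "lrs S R m1 (pw a @ iw b) (pw C1 @ iw D1)"
        "lrs S R m2 y (pw P2 @ iw Q2)" "lrs S R m3 (iw D1 @ pw P2) (pw C3 @ iw D3)"
        "A2 = C1 @ C3" "B2 = Q2 @ D3" by blast
      from nrm_lrs_pwiw[OF g(2)] have g2: "m1 = 0" "C1 = a" "D1 = b" by auto
      have r1: "lrs S R n1 w1 (pw A1 @ iw (s # B1))"
        using lrs_ctx[OF h(2), of "[]" "[Neg s]"] M by simp
      have r2: "lrs S R m2 w2 (pw (t # P2) @ iw Q2)"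
        using lrs_ctx[OF g(3), of "[Pos t]" "[]"] M by simp
      have "lstep S R (iw B1 @ [Neg s, Pos t] @ pw P2) (iw B1 @ pw a @ iw b @ pw P2)"
        using lstep.intros[OF lr] by simp
      then have s1: "lrs S R 1 (iw (s # B1) @ pw (t # P2)) (iw B1 @ pw a @ iw b @ pw P2)"
        using lrs1 by fastforce
      have s2: "lrs S R m3 (iw B1 @ pw a @ iw b @ pw P2) (iw B1 @ pw a @ pw C3 @ iw D3)"
        using lrs_ctx[OF g(4), of "iw B1 @ pw a" "[]"] g2 by simp
      have s3: "lrs S R n3 (iw B1 @ pw a @ pw C3 @ iw D3) (pw A3 @ iw (D3 @ B3))"
        using lrs_ctx[OF h(4), of "[]" "iw D3"] g(5) g2 by simp
      have r3: "lrs S R (1 + m3 + n3) (iw (s # B1) @ pw (t # P2)) (pw A3 @ iw (D3 @ B3))"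
        using lrs_trans[OF lrs_trans[OF s1 s2] s3] .
      have "n1 + m2 + (1 + m3 + n3) \<le> n" using h(1) g(1) Suc by simp
      moreover have "Q = Q2 @ (D3 @ B3)" using h(6) g(6) by simp
      ultimately show ?thesis using r1 r2 r3 h(5) by blast
    qed
  qed
qed


lemma lcancel: "set u \<subseteq> S \<Longrightarrow> (lstep S R)\<^sup>*\<^sup>* (x @ iw u @ pw u @ y) (x @ y)"
proof (induction u arbitrary: x y)
  case Nil then show ?case by simp
next
  case (Cons c u)
  have "lrule S R c c [] []" using Cons.prems by (simp add: lrule_def)
  from lstep.intros[OF this, of "x @ iw u" "pw u @ y"]
  have "lstep S R (x @ iw (c#u) @ pw (c#u) @ y) (x @ iw u @ pw u @ y)" by simp
  moreover have "(lstep S R)\<^sup>*\<^sup>* (x @ iw u @ pw u @ y) (x @ y)" using Cons by simp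
  ultimately show ?case by (rule converse_rtranclp_into_rtranclp)
qed

lemma rstep_l: "rrev_step S R w w' \<Longrightarrow> (lstep S R)\<^sup>*\<^sup>* w w'"
proof (induction rule: rrev_step.induct)
  case (cancel u x y)
  then show ?case using lcancel by blast
next
  case (rel u v u' v' x y)
  obtain s u0 where u: "u = s # u0" using rel by (cases u) auto
  obtain t v0 where v: "v = t # v0" using rel by (cases v) auto
  have "lrule S R s t (u0 @ v') (v0 @ u')" using rel u v by (simp add: lrule_def)
  from lstep.intros[OF this, of "x @ iw u0" "pw v0 @ y"]
  have 1: "lstep S R (x @ iw u @ pw v @ y) (x @ iw u0 @ pw u0 @ (pw v' @ iw u' @ iw v0 @ pw v0 @ y))"
    using u v by simp
  have 2: "(lstep S R)\<^sup>*\<^sup>* (x @ iw u0 @ pw u0 @ (pw v' @ iw u' @ iw v0 @ pw v0 @ y))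
     ((x @ pw v' @ iw u') @ iw v0 @ pw v0 @ y)"
    using lcancel[of u0 S R x] rel u by simp
  have 3: "(lstep S R)\<^sup>*\<^sup>* ((x @ pw v' @ iw u') @ iw v0 @ pw v0 @ y) ((x @ pw v' @ iw u') @ y)"
    using lcancel[of v0 S R "x @ pw v' @ iw u'" y] rel v by simp
  show ?case using converse_rtranclp_into_rtranclp[OF 1 rtranclp_trans[OF 2 3]] by simp
qed

lemma lstar_lrs: "(lstep S R)\<^sup>*\<^sup>* w w' \<Longrightarrow> \<exists>n. lrs S R n w w'"
  by (induction rule: converse_rtranclp_induct) (auto intro: lrs.intros)

lemma rrev_lrs: "rrev S R w w' \<Longrightarrow> \<exists>n. lrs S R n w w'"
proof -
  assume "rrev S R w w'"
  then have "(lstep S R)\<^sup>*\<^sup>* w w'" unfolding rrev_def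
    by (induction rule: rtranclp_induct) (auto dest: rstep_l)
  then show ?thesis by (rule lstar_lrs)
qed

lemma lstep_r: "lstep S R w w' \<Longrightarrow> rrev_step S R w w'"
proof (induction rule: lstep.induct)
  case (1 s t a b x y)
  then show ?case
  proof (cases "s = t \<and> s \<in> S \<and> a = [] \<and> b = []")
    case True
    then show ?thesis using rrev_step.cancel[where u="[s]" and S=S and R=R and x=x and y=y] by auto
  next
    case False
    then have "s \<in> S \<and> t \<in> S \<and> set a \<subseteq> S \<and> set b \<subseteq> S \<and> is_rel R ([s]@a) ([t]@b)"
      using 1 False unfolding lrule_def by auto
    then show ?thesis using rrev_step.rel[where u="[s]" and v="[t]" and S=S and R=R and u'=b and v'=a and x=x and y=y] by simp
  qed
qed

lemma lrs_rrev: "lrs S R n w w' \<Longrightarrow> rrev S R w w'"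
  unfolding rrev_def
  by (induction rule: lrs.induct) (auto dest: lstep_r intro: converse_rtranclp_into_rtranclp)

lemma rrev_step_ctx: "rrev_step S R w w' \<Longrightarrow> rrev_step S R (p@w@q) (p@w'@q)"
proof (induction rule: rrev_step.induct)
  case (cancel u x y)
  from rrev_step.cancel[OF cancel, where x="p@x" and R=R and y="y@q"] show ?case by simp
next
  case (rel u v u' v' x y)
  from rrev_step.rel[OF rel, where x="p@x" and y="y@q"] show ?case by simp
qed

lemma rrev_ctx: "rrev S R w w' \<Longrightarrow> rrev S R (p@w@q) (p@w'@q)"
  unfolding rrev_def
  by (induction rule: rtranclp_induct) (auto dest: rrev_step_ctx intro: rtranclp.rtrancl_into_rtrancl)

lemma rrev_trans: "rrev S R a b \<Longrightarrow> rrev S R b c \<Longrightarrow> rrev S R a c"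
  unfolding rrev_def by simp

definition ltr :: "'a sletter \<Rightarrow> 'a" where
  "ltr c = (case c of Pos a \<Rightarrow> a | Neg a \<Rightarrow> a)"

lemma ltr_simps[simp]: "ltr (Pos a) = a" "ltr (Neg a) = a" by (simp_all add: ltr_def)

lemma ltr_pw[simp]: "ltr ` set (pw u) = set u" by (simp add: pw_def image_image)
lemma ltr_iw[simp]: "ltr ` set (iw u) = set u" by (simp add: iw_def image_image)

lemma lstep_S: "lstep S R w w' \<Longrightarrow> ltr ` set w \<subseteq> S \<Longrightarrow> ltr ` set w' \<subseteq> S"
  by (induction rule: lstep.induct) (auto simp: lrule_def pw_def iw_def)

lemma lrs_S: "lrs S R n w w' \<Longrightarrow> ltr ` set w \<subseteq> S \<Longrightarrow> ltr ` set w' \<subseteq> S"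
  by (induction rule: lrs.induct) (auto dest: lstep_S)


fun sem :: "'a set \<Rightarrow> ('a list \<times> 'a list) set \<Rightarrow> 'a sletter list \<Rightarrow> ('a list \<times> 'a list) set" where
  "sem S R [] = {(x,y). pequiv S R x y}"
| "sem S R (Pos s # w) = {(x,z). s \<in> S \<and> (\<exists>y. pequiv S R (x@[s]) y \<and> (y,z) \<in> sem S R w)}"
| "sem S R (Neg s # w) = {(x,z). s \<in> S \<and> (\<exists>y. pequiv S R x (y@[s]) \<and> (y,z) \<in> sem S R w)}"

context
  fixes S :: "'a set" and R :: "('a list \<times> 'a list) set"
  assumes pp: "positive_presentation S R"
begin

lemma pe_S: "pequiv S R u v \<Longrightarrow> set u \<subseteq> S \<and> set v \<subseteq> S"
  by (induction rule: pequiv.induct) (use pp in \<open>auto simp: positive_presentation_def\<close>)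

lemma pe_Nil: "pequiv S R u v \<Longrightarrow> (u = [] \<longleftrightarrow> v = [])"
  by (induction rule: pequiv.induct) (use pp in \<open>auto simp: positive_presentation_def\<close>)

lemma pe_refl: "set w \<subseteq> S \<Longrightarrow> pequiv S R w w"
  by (rule pequiv.refl)

lemma pe_appR: "pequiv S R u v \<Longrightarrow> set x \<subseteq> S \<Longrightarrow> pequiv S R (u@x) (v@x)"
  by (rule pequiv.mult) (auto intro: pequiv.refl)

lemma pe_appL: "pequiv S R u v \<Longrightarrow> set x \<subseteq> S \<Longrightarrow> pequiv S R (x@u) (x@v)"
  by (rule pequiv.mult) (auto intro: pequiv.refl)

lemma sem_dom: "(x,z) \<in> sem S R w \<Longrightarrow> set x \<subseteq> S \<and> set z \<subseteq> S"
proof (induction w arbitrary: x z)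
  case Nil then show ?case using pe_S by auto
next
  case (Cons c w)
  show ?case
  proof (cases c)
    case (Pos s)
    then obtain y where "pequiv S R (x@[s]) y" "(y,z) \<in> sem S R w" using Cons.prems by auto
    then show ?thesis using pe_S[of "x@[s]" y] Cons.IH by auto
  next
    case (Neg s)
    then obtain y where "pequiv S R x (y@[s])" "(y,z) \<in> sem S R w" using Cons.prems by auto
    then show ?thesis using pe_S[of x "y@[s]"] Cons.IH by auto
  qed
qed

lemma sem_lclosed: "pequiv S R x' x \<Longrightarrow> (x,z) \<in> sem S R w \<Longrightarrow> (x',z) \<in> sem S R w"
proof (cases w)
  case Nil
  assume "pequiv S R x' x" "(x,z) \<in> sem S R w"
  then show ?thesis using Nil by (auto intro: pequiv.trans)
next
  case (Cons c w')
  assume h: "pequiv S R x' x" "(x,z) \<in> sem S R w"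
  show ?thesis
  proof (cases c)
    case (Pos s)
    then obtain y where y: "s \<in> S" "pequiv S R (x@[s]) y" "(y,z) \<in> sem S R w'" using h Cons by auto
    have "pequiv S R (x'@[s]) (x@[s])" using pe_appR[OF h(1), of "[s]"] y by simp
    then have "pequiv S R (x'@[s]) y" using y(2) by (rule pequiv.trans)
    then show ?thesis using y Pos Cons by auto
  next
    case (Neg s)
    then show ?thesis using h Cons by (auto intro: pequiv.trans)
  qed
qed

lemma sem_app: "(x,z) \<in> sem S R (w1 @ w2) \<longleftrightarrow> (\<exists>y. (x,y) \<in> sem S R w1 \<and> (y,z) \<in> sem S R w2)"
proof (induction w1 arbitrary: x)
  case Nil
  show ?case
  proof
    assume "(x, z) \<in> sem S R ([] @ w2)"
    then show "\<exists>y. (x, y) \<in> sem S R [] \<and> (y, z) \<in> sem S R w2"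
      using sem_dom pe_refl by fastforce
  next
    assume "\<exists>y. (x, y) \<in> sem S R [] \<and> (y, z) \<in> sem S R w2"
    then show "(x, z) \<in> sem S R ([] @ w2)" using sem_lclosed by auto
  qed
next
  case (Cons c w1)
  then show ?case by (cases c) auto
qed

lemma sem_pw: "(x,z) \<in> sem S R (pw v) \<longleftrightarrow> set v \<subseteq> S \<and> pequiv S R (x@v) z"
proof (induction v arbitrary: x)
  case Nil then show ?case by auto
next
  case (Cons s v)
  show ?case
  proof
    assume "(x, z) \<in> sem S R (pw (s # v))"
    then obtain y where "s \<in> S" "pequiv S R (x@[s]) y" "set v \<subseteq> S" "pequiv S R (y@v) z"
      using Cons by auto
    then show "set (s # v) \<subseteq> S \<and> pequiv S R (x @ s # v) z"
      using pe_appR[of "x@[s]" y v] by (auto intro: pequiv.trans)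
  next
    assume h: "set (s # v) \<subseteq> S \<and> pequiv S R (x @ s # v) z"
    then have "set x \<subseteq> S" using pe_S[OF conjunct2[OF h]] by auto
    then have "pequiv S R (x@[s]) (x@[s])" using h by (intro pe_refl) auto
    then show "(x, z) \<in> sem S R (pw (s # v))" using h Cons by auto
  qed
qed

lemma sem_iw: "(x,z) \<in> sem S R (iw u) \<longleftrightarrow> set u \<subseteq> S \<and> pequiv S R x (z@u)"
proof (induction u arbitrary: x rule: rev_induct)
  case Nil then show ?case by auto
next
  case (snoc s u)
  have e: "iw (u @ [s]) = Neg s # iw u" by (simp add: iw_def)
  show ?case
  proof
    assume "(x, z) \<in> sem S R (iw (u@[s]))"
    then obtain y where "s \<in> S" "pequiv S R x (y@[s])" "set u \<subseteq> S" "pequiv S R y (z@u)"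
      using snoc e by auto
    then show "set (u@[s]) \<subseteq> S \<and> pequiv S R x (z @ u @ [s])"
      using pe_appR[of y "z@u" "[s]"] by (auto intro: pequiv.trans)
  next
    assume h: "set (u@[s]) \<subseteq> S \<and> pequiv S R x (z @ u @ [s])"
    then have "set z \<subseteq> S" using pe_S[OF conjunct2[OF h]] by auto
    then have "pequiv S R (z@u) (z@u)" using h by (intro pe_refl) auto
    then show "(x, z) \<in> sem S R (iw (u@[s]))" using h snoc e by (auto intro!: exI[of _ "z@u"])
  qed
qed

lemma sem_ctx: "sem S R w \<subseteq> sem S R w' \<Longrightarrow> sem S R (p@w@q) \<subseteq> sem S R (p@w'@q)"
  by (auto simp: sem_app) blast

lemma is_rel_pe: "is_rel R a b \<Longrightarrow> pequiv S R a b"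
  unfolding is_rel_def by (auto intro: pequiv.base pequiv.sym)

lemma sem_step: "rrev_step S R w w' \<Longrightarrow> sem S R w \<subseteq> sem S R w'"
proof (induction rule: rrev_step.induct)
  case (cancel u x y)
  have "sem S R (iw u @ pw u @ []) \<subseteq> sem S R ([] @ [] @ [])"
  proof
    fix p assume "p \<in> sem S R (iw u @ pw u @ [])"
    then obtain a b where p: "p = (a,b)" and "(a,b) \<in> sem S R (iw u @ pw u)" by (cases p) auto
    then obtain m where "pequiv S R a (m@u)" "pequiv S R (m@u) b"
      by (auto simp: sem_app sem_iw sem_pw)
    then show "p \<in> sem S R ([] @ [] @ [])" using p by (auto intro: pequiv.trans)
  qed
  from sem_ctx[OF this, of x y] show ?case by simp
next
  case (rel u v u' v' x y)
  have "sem S R (iw u @ pw v @ []) \<subseteq> sem S R (pw v' @ iw u' @ [])"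
  proof
    fix p assume "p \<in> sem S R (iw u @ pw v @ [])"
    then obtain a b where p: "p = (a,b)" and "(a,b) \<in> sem S R (iw u @ pw v)" by (cases p) auto
    then obtain m where m: "pequiv S R a (m@u)" "pequiv S R (m@v) b"
      by (auto simp: sem_app sem_iw sem_pw)
    have sm: "set m \<subseteq> S" "set a \<subseteq> S" "set b \<subseteq> S" using pe_S[OF m(1)] pe_S[OF m(2)] by auto
    have 1: "pequiv S R (a@v') (m@u@v')" using pe_appR[OF m(1), of v'] rel by simp
    have 2: "pequiv S R (m@u@v') (m@v@u')"
      using pe_appL[OF is_rel_pe[OF rel(7)] sm(1)] by simp
    have 3: "pequiv S R (m@v@u') (b@u')" using pe_appR[OF m(2), of u'] rel by simp
    have "pequiv S R (a@v') (b@u')" using pequiv.trans[OF pequiv.trans[OF 1 2] 3] .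
    moreover have "pequiv S R (a@v') (a@v')" using sm rel by (intro pe_refl) auto
    ultimately show "p \<in> sem S R (pw v' @ iw u' @ [])" using p rel
      by (auto simp: sem_app sem_iw sem_pw)
  qed
  from sem_ctx[OF this, of x y] show ?case by simp
qed

lemma sem_rrev: "rrev S R w w' \<Longrightarrow> sem S R w \<subseteq> sem S R w'"
  unfolding rrev_def by (induction rule: rtranclp_induct) (auto dest: sem_step)

lemma sound: "set u \<subseteq> S \<Longrightarrow> set v \<subseteq> S \<Longrightarrow> rrev S R (iw u @ pw v) (pw v' @ iw u') \<Longrightarrow>
   pequiv S R (u@v') (v@u')"
proof -
  assume h: "set u \<subseteq> S" "set v \<subseteq> S" "rrev S R (iw u @ pw v) (pw v' @ iw u')"
  have "(u, v) \<in> sem S R (iw u @ pw v)" using h by (auto simp: sem_app sem_iw sem_pw intro!: exI[of _ "[]"] pe_refl)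
  then have "(u, v) \<in> sem S R (pw v' @ iw u')" using sem_rrev[OF h(3)] by auto
  then show ?thesis by (auto simp: sem_app sem_iw sem_pw intro: pequiv.trans)
qed

lemma sound_gen: "(a,b) \<in> sem S R w \<Longrightarrow> rrev S R w (pw v' @ iw u') \<Longrightarrow> pequiv S R (a@v') (b@u')"
proof -
  assume "(a,b) \<in> sem S R w" "rrev S R w (pw v' @ iw u')"
  then have "(a, b) \<in> sem S R (pw v' @ iw u')" using sem_rrev by auto
  then show ?thesis by (auto simp: sem_app sem_iw sem_pw intro: pequiv.trans)
qed

lemma rc_C1:
  assumes rc: "r_complete S R" and su: "set u \<subseteq> S" and sv: "set v \<subseteq> S"
  shows "pequiv S R u v \<longleftrightarrow> rrev S R (iw u @ pw v) []"
proof
  assume "pequiv S R u v"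
  then have "pequiv S R (u@[]) (v@[])" by simp
  moreover have "set ([]::'a list) \<subseteq> S" by simp
  ultimately obtain u'' v'' w where h: "rrev S R (iw u @ pw v) (pw v'' @ iw u'')"
    "pequiv S R [] (u'' @ w)" "pequiv S R [] (v'' @ w)"
    using rc su sv unfolding r_complete_def by blast
  from h(2,3) have "u'' = []" "v'' = []" using pe_Nil by auto
  then show "rrev S R (iw u @ pw v) []" using h(1) by simp
next
  assume "rrev S R (iw u @ pw v) []"
  then have "rrev S R (iw u @ pw v) (pw [] @ iw [])" by simp
  from sound[OF su sv this] show "pequiv S R u v" by simp
qed

lemma C1_rc:
  assumes C1: "\<forall>u v. set u \<subseteq> S \<longrightarrow> set v \<subseteq> S \<longrightarrow> (pequiv S R u v \<longleftrightarrow> rrev S R (iw u @ pw v) [])"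
  shows "r_complete S R"
  unfolding r_complete_def
proof (intro allI impI)
  fix u v u' v'
  assume su: "set u \<subseteq> S" and sv: "set v \<subseteq> S" and su': "set u' \<subseteq> S" and sv': "set v' \<subseteq> S"
    and e: "pequiv S R (u @ v') (v @ u')"
  from C1 su sv su' sv' e have "rrev S R (iw (u@v') @ pw (v@u')) []" by auto
  then obtain n where "lrs S R n (iw (u@v') @ pw (v@u')) []" using rrev_lrs by blast
  then have "lrs S R n (iw v' @ (iw u @ pw v @ pw u')) (pw [] @ iw [])" by simp
  from split_lrs[OF this] obtain n1 n2 n3 P1 Q1 P2 Q2 P3 Q3 where
    h: "lrs S R n1 (iw v') (pw P1 @ iw Q1)" "lrs S R n2 (iw u @ pw v @ pw u') (pw P2 @ iw Q2)"
    "lrs S R n3 (iw Q1 @ pw P2) (pw P3 @ iw Q3)" "[] = P1 @ P3" "[] = Q2 @ Q3" by blast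
  have "lrs S R n1 (pw [] @ iw v') (pw P1 @ iw Q1)" using h(1) by simp
  from nrm_lrs_pwiw[OF this] have q1: "Q1 = v'" by simp
  have e3: "P3 = []" "Q2 = []" "Q3 = []" using h(4,5) by auto
  have h2: "lrs S R n2 ((iw u @ pw v) @ pw u') (pw P2 @ iw [])" using h(2) e3 by simp
  have h3: "lrs S R n3 (iw v' @ pw P2) (pw [] @ iw [])" using h(3) e3 q1 by simp
  have sP2: "set P2 \<subseteq> S"
  proof -
    have "ltr ` set ((iw u @ pw v) @ pw u') \<subseteq> S" using su sv su'
      by (simp only: set_append image_Un ltr_iw ltr_pw) blast
    from lrs_S[OF h2 this] show ?thesis by (simp only: set_append image_Un ltr_iw ltr_pw) blast
  qed
  have ev: "pequiv S R v' P2" using sound[OF sv' sP2 lrs_rrev[OF h3]] by simp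
  from split_lrs[OF h2] obtain k1 k2 k3 A1 B1 C D A3 B3 where
    g: "lrs S R k1 (iw u @ pw v) (pw A1 @ iw B1)" "lrs S R k2 (pw u') (pw C @ iw D)"
    "lrs S R k3 (iw B1 @ pw C) (pw A3 @ iw B3)" "P2 = A1 @ A3" "[] = D @ B3" by blast
  have "lrs S R k2 (pw u' @ iw []) (pw C @ iw D)" using g(2) by simp
  from nrm_lrs_pwiw[OF this] have cd: "C = u'" "D = []" by auto
  have sAB: "set A1 \<subseteq> S" "set B1 \<subseteq> S"
  proof -
    have "ltr ` set (iw u @ pw v) \<subseteq> S" using su sv
      by (simp only: set_append image_Un ltr_iw ltr_pw) blast
    from lrs_S[OF g(1) this] show "set A1 \<subseteq> S" "set B1 \<subseteq> S"
      by (simp_all only: set_append image_Un ltr_iw ltr_pw) blast+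
  qed
  have g3: "lrs S R k3 (iw B1 @ pw u') (pw A3 @ iw [])" using g(3) g(5) cd by simp
  have eu: "pequiv S R (B1 @ A3) u'" using sound[OF sAB(2) su' lrs_rrev[OF g3]] by simp
  have sA3: "set A3 \<subseteq> S" using pe_S[OF eu] by auto
  have "rrev S R (iw u @ pw v) (pw A1 @ iw B1)" using lrs_rrev[OF g(1)] .
  moreover have "pequiv S R u' (B1 @ A3)" using eu by (rule pequiv.sym)
  moreover have "pequiv S R v' (A1 @ A3)" using ev g(4) by simp
  ultimately show "\<exists>u'' v'' w. set u'' \<subseteq> S \<and> set v'' \<subseteq> S \<and> set w \<subseteq> S \<and>
         rrev S R (iw u @ pw v) (pw v'' @ iw u'') \<and>
         pequiv S R u' (u'' @ w) \<and> pequiv S R v' (v'' @ w)"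
    using sAB sA3 by blast
qed

definition inv :: "'a sletter list \<Rightarrow> 'a sletter list" where
  "inv w = rev (map (\<lambda>c. case c of Pos a \<Rightarrow> Neg a | Neg a \<Rightarrow> Pos a) w)"

lemma inv_app[simp]: "inv (a @ b) = inv b @ inv a" by (simp add: inv_def)
lemma inv_pw[simp]: "inv (pw u) = iw u" by (simp add: inv_def pw_def iw_def)
lemma inv_iw[simp]: "inv (iw u) = pw u" by (simp add: inv_def pw_def iw_def rev_map)
lemma inv_Nil[simp]: "inv [] = []" by (simp add: inv_def)

lemma inv_step: "rrev_step S R w w' \<Longrightarrow> rrev_step S R (inv w) (inv w')"
proof (induction rule: rrev_step.induct)
  case (cancel u x y)
  from rrev_step.cancel[OF cancel, where x="inv y" and y="inv x" and R=R] show ?case by simp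
next
  case (rel u v u' v' x y)
  have "is_rel R (v @ u') (u @ v')" using rel(7) by (auto simp: is_rel_def)
  from rrev_step.rel[OF rel(2,1,4,3,6,5) this, where x="inv y" and y="inv x"] show ?case by simp
qed

lemma inv_rrev: "rrev S R w w' \<Longrightarrow> rrev S R (inv w) (inv w')"
  unfolding rrev_def
  by (induction rule: rtranclp_induct) (auto dest: inv_step intro: rtranclp.rtrancl_into_rtrancl)

lemma C2_fwd:
  assumes C2: "\<forall>u v w. set u \<subseteq> S \<longrightarrow> set v \<subseteq> S \<longrightarrow> set w \<subseteq> S \<longrightarrow>
                  rrev S R (iw u @ pw v) [] \<longrightarrow> rrev S R (iw v @ pw w) [] \<longrightarrow>
                  rrev S R (iw u @ pw w) []"
  shows "pequiv S R u v \<Longrightarrow> rrev S R (iw u @ pw v) []"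
proof (induction rule: pequiv.induct)
  case (base u v)
  then have "u \<noteq> [] \<and> v \<noteq> [] \<and> set u \<subseteq> S \<and> set v \<subseteq> S" using pp
    by (auto simp: positive_presentation_def)
  moreover have "is_rel R (u @ []) (v @ [])" using base by (simp add: is_rel_def)
  ultimately have "rrev_step S R ([] @ iw u @ pw v @ []) ([] @ pw [] @ iw [] @ [])"
    by (intro rrev_step.rel) auto
  then show ?case unfolding rrev_def by (simp add: r_into_rtranclp)
next
  case (refl w)
  show ?case
  proof (cases "w = []")
    case True then show ?thesis by (simp add: rrev_def)
  next
    case False
    then have "rrev_step S R ([] @ iw w @ pw w @ []) ([] @ [])" using refl
      by (intro rrev_step.cancel) auto
    then show ?thesis unfolding rrev_def by (simp add: r_into_rtranclp)
  qed
next
  case (sym u v)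
  from inv_rrev[OF sym.IH] show ?case by simp
next
  case (trans u v w)
  have "set u \<subseteq> S" "set v \<subseteq> S" "set w \<subseteq> S" using pe_S[OF trans.hyps(1)] pe_S[OF trans.hyps(2)] by auto
  then show ?case using C2 trans.IH by blast
next
  case (mult u v u' v')
  have "rrev S R (iw u' @ (iw u @ pw v) @ pw v') (iw u' @ [] @ pw v')"
    by (rule rrev_ctx[OF mult.IH(1)])
  then have "rrev S R (iw (u@u') @ pw (v@v')) (iw u' @ pw v')" by simp
  then show ?case using mult.IH(2) by (rule rrev_trans)
qed


lemma sem_cube: "set u \<subseteq> S \<Longrightarrow> set v \<subseteq> S \<Longrightarrow> set w \<subseteq> S \<Longrightarrow>
  (u, v) \<in> sem S R (iw u @ pw w @ iw w @ pw v)"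
proof -
  assume h: "set u \<subseteq> S" "set v \<subseteq> S" "set w \<subseteq> S"
  have 1: "(u, []) \<in> sem S R (iw u)" using h by (simp add: sem_iw pe_refl)
  have 2: "([], w) \<in> sem S R (pw w)" using h by (simp add: sem_pw pe_refl)
  have 3: "(w, []) \<in> sem S R (iw w)" using h by (simp add: sem_iw pe_refl)
  have 4: "([], v) \<in> sem S R (pw v)" using h by (simp add: sem_pw pe_refl)
  show ?thesis unfolding sem_app using 1 2 3 4 by blast
qed

lemma C1_C3:
  assumes C1: "\<forall>u v. set u \<subseteq> S \<longrightarrow> set v \<subseteq> S \<longrightarrow> (pequiv S R u v \<longleftrightarrow> rrev S R (iw u @ pw v) [])"
  and h: "set u \<subseteq> S" "set v \<subseteq> S" "set w \<subseteq> S"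
  shows "strong_r_cube S R u v w"
  unfolding strong_r_cube_def
proof (intro allI impI)
  fix u' v' assume s: "set u' \<subseteq> S" "set v' \<subseteq> S"
    and r: "rrev S R (iw u @ pw w @ iw w @ pw v) (pw v' @ iw u')"
  have "pequiv S R (u@v') (v@u')" using sound_gen[OF sem_cube[OF h] r] .
  then show "rrev S R (iw (u @ v') @ pw (v @ u')) []" using C1 h s by simp
qed

lemma C1_C4:
  assumes C1: "\<forall>u v. set u \<subseteq> S \<longrightarrow> set v \<subseteq> S \<longrightarrow> (pequiv S R u v \<longleftrightarrow> rrev S R (iw u @ pw v) [])"
  and h: "set u \<subseteq> S" "set v \<subseteq> S" "set w \<subseteq> S"
  shows "r_cube S R u v w"
  unfolding r_cube_def
proof (intro allI impI)
  fix u' v' assume s: "set u' \<subseteq> S" "set v' \<subseteq> S"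
    and r: "rrev S R (iw u @ pw w @ iw w @ pw v) (pw v' @ iw u')"
  have "pequiv S R (u@v') (v@u')" using sound_gen[OF sem_cube[OF h] r] .
  moreover have "r_complete S R" using C1_rc[OF C1] .
  ultimately show "\<exists>u'' v'' w''. set u'' \<subseteq> S \<and> set v'' \<subseteq> S \<and> set w'' \<subseteq> S \<and>
         rrev S R (iw u @ pw v) (pw v'' @ iw u'') \<and>
         pequiv S R u' (u'' @ w'') \<and> pequiv S R v' (v'' @ w'')"
    using h s unfolding r_complete_def by blast
qed

lemma chain2: "rrev S R (iw u @ pw v) [] \<Longrightarrow> rrev S R (iw v @ pw w) [] \<Longrightarrow>
   rrev S R (iw u @ pw v @ iw v @ pw w) []"
proof -
  assume a: "rrev S R (iw u @ pw v) []" and b: "rrev S R (iw v @ pw w) []"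
  have "rrev S R ([] @ (iw u @ pw v) @ (iw v @ pw w)) ([] @ [] @ (iw v @ pw w))"
    by (rule rrev_ctx[OF a])
  then show ?thesis using b by (simp add: rrev_trans)
qed

lemma C3_C2:
  assumes C3: "\<forall>u v w. set u \<subseteq> S \<longrightarrow> set v \<subseteq> S \<longrightarrow> set w \<subseteq> S \<longrightarrow> strong_r_cube S R u v w"
  and h: "set u \<subseteq> S" "set v \<subseteq> S" "set w \<subseteq> S"
  and a: "rrev S R (iw u @ pw v) []" and b: "rrev S R (iw v @ pw w) []"
  shows "rrev S R (iw u @ pw w) []"
proof -
  have c: "rrev S R (iw u @ pw v @ iw v @ pw w) (pw [] @ iw [])" using chain2[OF a b] by simp
  have "strong_r_cube S R u w v" using C3 h by blast
  then have "rrev S R (iw (u @ []) @ pw (w @ [])) []" using c unfolding strong_r_cube_def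
    by (metis empty_subsetI list.set(1))
  then show ?thesis by simp
qed

lemma C4_C2:
  assumes C4: "\<forall>u v w. set u \<subseteq> S \<longrightarrow> set v \<subseteq> S \<longrightarrow> set w \<subseteq> S \<longrightarrow> r_cube S R u v w"
  and h: "set u \<subseteq> S" "set v \<subseteq> S" "set w \<subseteq> S"
  and a: "rrev S R (iw u @ pw v) []" and b: "rrev S R (iw v @ pw w) []"
  shows "rrev S R (iw u @ pw w) []"
proof -
  have c: "rrev S R (iw u @ pw v @ iw v @ pw w) (pw [] @ iw [])" using chain2[OF a b] by simp
  have "r_cube S R u w v" using C4 h by blast
  then obtain u'' v'' w'' where g: "rrev S R (iw u @ pw w) (pw v'' @ iw u'')"
    "pequiv S R [] (u'' @ w'')" "pequiv S R [] (v'' @ w'')"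
    using c unfolding r_cube_def by (metis empty_subsetI list.set(1))
  then have "u'' = []" "v'' = []" using pe_Nil by auto
  then show ?thesis using g(1) by simp
qed

end


theorem proposition3p3:
  fixes S :: "'a set" and R :: "('a list \<times> 'a list) set"
  assumes "positive_presentation S R"
  defines "C1 \<equiv> (\<forall>u v. set u \<subseteq> S \<longrightarrow> set v \<subseteq> S \<longrightarrow>
                  (pequiv S R u v \<longleftrightarrow> rrev S R (iw u @ pw v) []))"
      and "C2 \<equiv> (\<forall>u v w. set u \<subseteq> S \<longrightarrow> set v \<subseteq> S \<longrightarrow> set w \<subseteq> S \<longrightarrow>
                  rrev S R (iw u @ pw v) [] \<longrightarrow> rrev S R (iw v @ pw w) [] \<longrightarrow>
                  rrev S R (iw u @ pw w) [])"
      and "C3 \<equiv> (\<forall>u v w. set u \<subseteq> S \<longrightarrow> set v \<subseteq> S \<longrightarrow> set w \<subseteq> S \<longrightarrow>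
                  strong_r_cube S R u v w)"
      and "C4 \<equiv> (\<forall>u v w. set u \<subseteq> S \<longrightarrow> set v \<subseteq> S \<longrightarrow> set w \<subseteq> S \<longrightarrow>
                  r_cube S R u v w)"
  shows "(r_complete S R \<longleftrightarrow> C1) \<and> (C1 \<longleftrightarrow> C2) \<and> (C1 \<longleftrightarrow> C3) \<and> (C1 \<longleftrightarrow> C4)"
proof -
  note pp = assms(1)
  have a: "r_complete S R \<longleftrightarrow> C1"
    unfolding C1_def using rc_C1[OF pp] C1_rc[OF pp] by blast
  have b: "C1 \<Longrightarrow> C2"
  proof -
    assume c1: C1
    show C2 unfolding C2_def
    proof (intro allI impI)
      fix u v w assume s: "set u \<subseteq> S" "set v \<subseteq> S" "set w \<subseteq> S"
        and r: "rrev S R (iw u @ pw v) []" "rrev S R (iw v @ pw w) []"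
      have "pequiv S R u v" "pequiv S R v w" using c1 s r unfolding C1_def by auto
      then have "pequiv S R u w" by (rule pequiv.trans)
      then show "rrev S R (iw u @ pw w) []" using c1 s unfolding C1_def by auto
    qed
  qed
  have c: "C2 \<Longrightarrow> C1"
  proof -
    assume c2: C2
    show C1 unfolding C1_def
    proof (intro allI impI)
      fix u v assume s: "set u \<subseteq> S" "set v \<subseteq> S"
      show "pequiv S R u v \<longleftrightarrow> rrev S R (iw u @ pw v) []"
      proof
        assume "pequiv S R u v"
        then show "rrev S R (iw u @ pw v) []" using C2_fwd[OF pp] c2 unfolding C2_def by blast
      next
        assume "rrev S R (iw u @ pw v) []"
        then have "rrev S R (iw u @ pw v) (pw [] @ iw [])" by simp
        from sound[OF pp s this] show "pequiv S R u v" by simp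
      qed
    qed
  qed
  have d: "C1 \<Longrightarrow> C3" unfolding C3_def using C1_C3[OF pp] unfolding C1_def by blast
  have e: "C3 \<Longrightarrow> C2" unfolding C2_def C3_def using C3_C2[OF pp] by blast
  have f: "C1 \<Longrightarrow> C4" unfolding C4_def using C1_C4[OF pp] unfolding C1_def by blast
  have g: "C4 \<Longrightarrow> C2" unfolding C2_def C4_def using C4_C2[OF pp] by blast
  show ?thesis using a b c d e f g by blast
qed

end
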